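(* Let $P \subset \mathbb{R}^d$ be a smooth $d$-dimensional prismatoid whose bottom lies in the hyperplane $\{x \in \mathbb{R}^d : x_d = b\}$ and whose top lies in the hyperplane $\{x : x_d = b+h\}$, where $b$ is an integer and $h$ is a positive integer. Then every slice $S_l = P \cap \{x : x_d = b + l\}$, $l = 0,1,\dots,h$, is a lattice polytope of dimension $d-1$ which is Minkowski equivalent to the bottom of $P$ (and hence also to the top of $P$).
   Context: A lattice polytope is the convex hull of finitely many points of $\mathbb{Z}^d$. A $d$-dimensional polytope is simple if each vertex lies in exactly $d$ edges; the primitive edge directions at a vertex are the smallest lattice vectors along its incident edges; a $d$-dimensional lattice polytope in $\mathbb{R}^d$ is smooth if it is simple and at every vertex the primitive edge directions form a basis of $\mathbb{Z}^d$. A $d$-dimensional prism is a polytope affinely equivalent to $Q \times [0,1]$ for some $(d-1)$-dimensional polytope $Q$, with top and bottom facets the images of $Q\times\{1\}$ and $Q\times\{0\}$. A prismatoid is a polytope whose face lattice is isomorphic to that of a prism and such that the facets corresponding to the top and bottom facets (its top and bottom) are parallel, i.e. the linear subspaces parallel to their affine hulls coincide. Two polytopes are Minkowski equivalent if they have the same normal fan. *)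

theory Defs
  imports "HOL-Analysis.Analysis"
begin

definition lattice_pt :: "real^'d \<Rightarrow> bool" where
  "lattice_pt x \<longleftrightarrow> (\<forall>i. x $ i \<in> \<int>)"

definition lattice_polytope :: "(real^'d) set \<Rightarrow> bool" where
  "lattice_polytope P \<longleftrightarrow> (\<exists>V. finite V \<and> (\<forall>v\<in>V. lattice_pt v) \<and> P = convex hull V)"

definition is_vertex :: "(real^'d) set \<Rightarrow> real^'d \<Rightarrow> bool" where
  "is_vertex P v \<longleftrightarrow> {v} face_of P"

definition is_edge :: "(real^'d) set \<Rightarrow> (real^'d) set \<Rightarrow> bool" where
  "is_edge P e \<longleftrightarrow> e face_of P \<and> aff_dim e = 1"

definition edges_at :: "(real^'d) set \<Rightarrow> real^'d \<Rightarrow> (real^'d) set set" where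
  "edges_at P v = {e. is_edge P e \<and> v \<in> e}"

definition simple_polytope :: "(real^'d) set \<Rightarrow> bool" where
  "simple_polytope P \<longleftrightarrow> polytope P \<and> aff_dim P = int CARD('d) \<and>
     (\<forall>v. is_vertex P v \<longrightarrow> card (edges_at P v) = CARD('d))"

definition prim_dir :: "real^'d \<Rightarrow> (real^'d) set \<Rightarrow> real^'d \<Rightarrow> bool" where
  "prim_dir v e u \<longleftrightarrow> u \<noteq> 0 \<and> lattice_pt u \<and> (\<exists>t>0. v + t *\<^sub>R u \<in> e) \<and>
     (\<forall>s. 0 < s \<and> s < 1 \<longrightarrow> \<not> lattice_pt (s *\<^sub>R u))"

definition lattice_basis :: "(real^'d) set \<Rightarrow> bool" where
  "lattice_basis U \<longleftrightarrow> finite U \<and> card U = CARD('d) \<and> independent U \<and> (\<forall>u\<in>U. lattice_pt u) \<and>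
     (\<forall>z. lattice_pt z \<longrightarrow> (\<exists>c. (\<forall>u\<in>U. c u \<in> \<int>) \<and> z = (\<Sum>u\<in>U. c u *\<^sub>R u)))"

definition smooth_polytope :: "(real^'d) set \<Rightarrow> bool" where
  "smooth_polytope P \<longleftrightarrow> lattice_polytope P \<and> simple_polytope P \<and>
     (\<forall>v. is_vertex P v \<longrightarrow>
        (\<exists>dir. (\<forall>e\<in>edges_at P v. prim_dir v e (dir e)) \<and> inj_on dir (edges_at P v) \<and>
               lattice_basis (dir ` edges_at P v)))"

(* the standard prism over Q (a (d-1)-polytope in the coordinate hyperplane x_j = 0):
   Q + [0, e_j], which is affinely equivalent to Q \<times> [0,1] *)
definition std_prism :: "(real^'d) set \<Rightarrow> 'd \<Rightarrow> (real^'d) set" where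
  "std_prism Q j = {q + t *\<^sub>R axis j 1 | q t. q \<in> Q \<and> 0 \<le> t \<and> t \<le> 1}"

definition lin_dir :: "(real^'d) set \<Rightarrow> (real^'d) set" where
  "lin_dir S = {x - y | x y. x \<in> affine hull S \<and> y \<in> affine hull S}"

(* P is a prismatoid with bottom B and top T: the face lattice of P is isomorphic
   to that of a prism Q \<times> [0,1] with B, T corresponding to Q\<times>{0}, Q\<times>{1};
   and B, T are parallel *)
definition prismatoid :: "(real^'d) set \<Rightarrow> (real^'d) set \<Rightarrow> (real^'d) set \<Rightarrow> bool" where
  "prismatoid P B T \<longleftrightarrow> polytope P \<and> aff_dim P = int CARD('d) \<and>
     (\<exists>(Q::(real^'d) set) (j::'d) f. polytope Q \<and> aff_dim Q = int CARD('d) - 1 \<and> Q \<subseteq> {x. x $ j = 0} \<and>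
        bij_betw f {F. F face_of P} {G. G face_of std_prism Q j} \<and>
        (\<forall>F F'. F face_of P \<longrightarrow> F' face_of P \<longrightarrow> (F \<subseteq> F' \<longleftrightarrow> f F \<subseteq> f F')) \<and>
        B face_of P \<and> T face_of P \<and>
        f B = Q \<and> f T = (\<lambda>q. q + axis j 1) ` Q) \<and>
     lin_dir B = lin_dir T"

definition normal_cone :: "(real^'d) set \<Rightarrow> (real^'d) set \<Rightarrow> (real^'d) set" where
  "normal_cone P F = {c. \<forall>x\<in>F. \<forall>y\<in>P. inner c y \<le> inner c x}"

definition normal_fan :: "(real^'d) set \<Rightarrow> (real^'d) set set" where
  "normal_fan P = {normal_cone P F | F. F face_of P \<and> F \<noteq> {}}"

definition minkowski_equiv :: "(real^'d) set \<Rightarrow> (real^'d) set \<Rightarrow> bool" where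
  "minkowski_equiv P Q \<longleftrightarrow> normal_fan P = normal_fan Q"

end

theory Submission
  imports Defs
begin

definition shj :: "'d \<Rightarrow> (real^'d) set \<Rightarrow> (real^'d) set" where
  "shj j X = (\<lambda>q. q + axis j 1) ` X"

lemma prism_sub1: "Q \<subseteq> std_prism Q j"
proof
  fix x assume "x \<in> Q" then show "x \<in> std_prism Q j"
    unfolding std_prism_def by (rule_tac CollectI, rule_tac x=x in exI, rule_tac x=0 in exI) auto
qed

lemma prism_sub2: "shj j Q \<subseteq> std_prism Q j"
proof
  fix x assume "x \<in> shj j Q" then obtain q where "q \<in> Q" "x = q + axis j 1" by (auto simp: shj_def)
  then show "x \<in> std_prism Q j"
    unfolding std_prism_def by (rule_tac CollectI, rule_tac x=q in exI, rule_tac x=1 in exI) auto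
qed

lemma prism_eq_sums: "std_prism Q j = {x + y | x y. x \<in> Q \<and> y \<in> closed_segment 0 (axis j 1)}"
  unfolding std_prism_def closed_segment_def by auto

lemma prism_compact: "polytope Q \<Longrightarrow> compact (std_prism Q j)"
  unfolding prism_eq_sums by (rule compact_sums) (auto intro: polytope_imp_compact)

lemma prism_convex: "polytope Q \<Longrightarrow> convex (std_prism Q j)"
proof -
  assume "polytope Q"
  then have "convex (\<Union>x\<in> Q. \<Union>y \<in> closed_segment 0 (axis j 1). {x + y})"
    by (intro convex_sums polytope_imp_convex convex_closed_segment)
  moreover have "(\<Union>x\<in> Q. \<Union>y \<in> closed_segment 0 (axis j 1). {x + y}) = std_prism Q j"
    unfolding prism_eq_sums by auto
  ultimately show ?thesis by simp
qed

lemma prism_extreme: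
  assumes "Q \<subseteq> {x. x $ j = 0}" "x extreme_point_of std_prism Q j"
  shows "x \<in> Q \<or> x \<in> shj j Q"
proof -
  have xin: "x \<in> std_prism Q j" using assms(2) extreme_point_of_def by blast
  then obtain q t where q: "q \<in> Q" "0 \<le> t" "t \<le> 1" "x = q + t *\<^sub>R axis j 1"
    unfolding std_prism_def by auto
  show ?thesis
  proof (cases "t = 0 \<or> t = 1")
    case True then show ?thesis using q by (auto simp: shj_def)
  next
    case False
    have a: "q \<in> std_prism Q j" using q prism_sub1 by blast
    have b: "q + axis j 1 \<in> std_prism Q j" using q prism_sub2 by (auto simp: shj_def)
    have ne: "q \<noteq> q + axis j 1" by (metis add_cancel_left_right axis_eq_0_iff zero_neq_one)
    have "x \<in> open_segment q (q + axis j 1)"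
      unfolding in_segment using False q ne
      by (rule_tac conjI, simp, rule_tac x=t in exI) (auto simp: algebra_simps)
    then show ?thesis using assms(2) a b unfolding extreme_point_of_def by blast
  qed
qed

lemma prism_face:
  assumes Qj: "Q \<subseteq> {x. x $ j = 0}" and W: "W face_of std_prism Q j"
    and ne1: "W \<inter> Q \<noteq> {}" and ne2: "W \<inter> shj j Q \<noteq> {}"
  shows "shj j (W \<inter> Q) = W \<inter> shj j Q"
proof -
  let ?e = "axis j (1::real)"
  obtain x0 where x0: "x0 \<in> W" "x0 \<in> Q" using ne1 by auto
  obtain q0 where q0: "q0 \<in> Q" "q0 + ?e \<in> W" using ne2 by (auto simp: shj_def)
  have key: "x + ?e \<in> W \<and> q \<in> W" if x: "x \<in> W" "x \<in> Q" and q: "q \<in> Q" "q + ?e \<in> W" for x q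
  proof -
    have m: "midpoint x (q + ?e) = midpoint (x + ?e) q"
      by (simp add: midpoint_def algebra_simps)
    have mW: "midpoint x (q + ?e) \<in> W"
      using x q convex_contains_segment[of W] face_of_imp_convex[OF W] midpoint_in_closed_segment by blast
    have "(x + ?e) $ j = 1" "q $ j = 0" using x q Qj by auto
    then have ne: "x + ?e \<noteq> q" by auto
    have a: "x + ?e \<in> std_prism Q j" using x prism_sub2 by (auto simp: shj_def)
    have b: "q \<in> std_prism Q j" using q prism_sub1 by blast
    have "midpoint (x + ?e) q \<in> open_segment (x + ?e) q" using ne by simp
    then show ?thesis using W a b mW m unfolding face_of_def by metis
  qed
  show ?thesis
  proof
    show "shj j (W \<inter> Q) \<subseteq> W \<inter> shj j Q"
    proof
      fix y assume y: "y \<in> shj j (W \<inter> Q)"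
      then obtain x where x: "x \<in> W" "x \<in> Q" "y = x + ?e" by (auto simp: shj_def)
      then have "x + ?e \<in> W" using key[OF x(1,2) q0] by auto
      then show "y \<in> W \<inter> shj j Q" using x by (auto simp: shj_def)
    qed
    show "W \<inter> shj j Q \<subseteq> shj j (W \<inter> Q)"
    proof
      fix y assume y: "y \<in> W \<inter> shj j Q"
      then obtain q where q: "q \<in> Q" "y = q + ?e" by (auto simp: shj_def)
      then have "q \<in> W" using key[OF x0 q(1)] y by auto
      then show "y \<in> shj j (W \<inter> Q)" using q by (auto simp: shj_def)
    qed
  qed
qed

locale prsm =
  fixes P B T :: "(real^'d) set" and Q :: "(real^'d) set" and j :: 'd
    and f :: "(real^'d) set \<Rightarrow> (real^'d) set" and k :: 'd and bb hh :: real
  assumes polyP: "polytope P" and dimP: "aff_dim P = int CARD('d)"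
  and polyQ: "polytope Q" and dimQ: "aff_dim Q = int CARD('d) - 1" and Qj: "Q \<subseteq> {x. x $ j = 0}"
  and bij: "bij_betw f {F. F face_of P} {G. G face_of std_prism Q j}"
  and ord: "\<forall>F F'. F face_of P \<longrightarrow> F' face_of P \<longrightarrow> (F \<subseteq> F' \<longleftrightarrow> f F \<subseteq> f F')"
  and BP: "B face_of P" and TP: "T face_of P" and fB: "f B = Q" and fT: "f T = shj j Q"
  and lin: "lin_dir B = lin_dir T"
  and Bh: "B \<subseteq> {x. x $ k = bb}" and Th: "T \<subseteq> {x. x $ k = bb + hh}" and hpos: "hh > 0"
begin

abbreviation "Prz \<equiv> std_prism Q j"

lemma fface: "F face_of P \<Longrightarrow> f F face_of Prz"
  using bij_betw_apply[OF bij] by auto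

lemma fsurj: "G face_of Prz \<Longrightarrow> \<exists>F. F face_of P \<and> f F = G"
  using bij unfolding bij_betw_def by (metis (mono_tags, lifting) imageE mem_Collect_eq)

lemma ordD: "F face_of P \<Longrightarrow> F' face_of P \<Longrightarrow> (F \<subseteq> F' \<longleftrightarrow> f F \<subseteq> f F')"
  using ord by blast

lemma f_empty: "f {} = {}"
proof -
  obtain G where "G face_of P" "f G = {}" using fsurj[of "{}"] by auto
  then show ?thesis using ordD[of "{}" G] by auto
qed

lemma f_ne: "F face_of P \<Longrightarrow> F \<noteq> {} \<Longrightarrow> f F \<noteq> {}"
  using ordD[of F "{}"] f_empty by auto

lemma f_meet: assumes "F face_of P" "F' face_of P" shows "f (F \<inter> F') = f F \<inter> f F'"
proof
  have I: "(F \<inter> F') face_of P" using assms face_of_Int by blast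
  show "f (F \<inter> F') \<subseteq> f F \<inter> f F'" using ordD[OF I assms(1)] ordD[OF I assms(2)] by auto
  have "(f F \<inter> f F') face_of Prz" using fface assms face_of_Int by blast
  then obtain X where X: "X face_of P" "f X = f F \<inter> f F'" using fsurj by blast
  then have "X \<subseteq> F" "X \<subseteq> F'" using ordD[OF X(1) assms(1)] ordD[OF X(1) assms(2)] by auto
  then have "f X \<subseteq> f (F \<inter> F')" using ordD[OF X(1) I] by auto
  then show "f F \<inter> f F' \<subseteq> f (F \<inter> F')" using X by auto
qed

lemma Q_ne: "Q \<noteq> {}"
  using dimQ by auto

lemma B_ne: "B \<noteq> {}" using fB Q_ne f_empty by auto
lemma T_ne: "T \<noteq> {}" using fT Q_ne f_empty by (auto simp: shj_def)

lemma polyB: "polytope B" using BP polyP face_of_polytope_polytope by blast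
lemma polyT: "polytope T" using TP polyP face_of_polytope_polytope by blast
lemma convB: "convex B" using polyB polytope_imp_convex by blast
lemma convT: "convex T" using polyT polytope_imp_convex by blast
lemma compB: "compact B" using polyB polytope_imp_compact by blast
lemma compT: "compact T" using polyT polytope_imp_compact by blast
lemma convP: "convex P" using polyP polytope_imp_convex by blast
lemma compP: "compact P" using polyP polytope_imp_compact by blast

lemma vertex_BT:
  assumes v: "v extreme_point_of P" shows "v \<in> B \<or> v \<in> T"
proof -
  have vf: "{v} face_of P" using v face_of_singleton by blast
  let ?W = "f {v}"
  have W: "?W face_of Prz" using fface vf by blast
  have Wne: "?W \<noteq> {}" using f_ne vf by blast
  have cW: "compact ?W" using face_of_imp_compact[OF prism_convex[OF polyQ] prism_compact[OF polyQ] W] .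
  obtain x where x: "x extreme_point_of ?W"
    using extreme_point_exists_convex[OF cW face_of_imp_convex[OF W] Wne] by blast
  have xf: "{x} face_of Prz" using face_of_trans[OF iffD2[OF face_of_singleton x] W] .
  then obtain G where G: "G face_of P" "f G = {x}" using fsurj by blast
  have "x \<in> ?W" using x extreme_point_of_def by blast
  then have "G \<subseteq> {v}" using ordD[OF G(1) vf] G by auto
  moreover have "G \<noteq> {}" using G f_empty by auto
  ultimately have "G = {v}" by auto
  then have fv: "f {v} = {x}" using G by simp
  have "x extreme_point_of Prz" using xf face_of_singleton by blast
  then have "x \<in> Q \<or> x \<in> shj j Q" using prism_extreme[OF Qj] by blast
  then show ?thesis
  proof
    assume "x \<in> Q" then have "f {v} \<subseteq> f B" using fv fB by auto
    then show ?thesis using ordD[OF vf BP] by auto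
  next
    assume "x \<in> shj j Q" then have "f {v} \<subseteq> f T" using fv fT by auto
    then show ?thesis using ordD[OF vf TP] by auto
  qed
qed

lemma P_hull: "P = convex hull (B \<union> T)"
proof
  have "{x. x extreme_point_of P} \<subseteq> B \<union> T" using vertex_BT by blast
  then show "P \<subseteq> convex hull (B \<union> T)"
    using Krein_Milman_Minkowski[OF compP convP] hull_mono by blast
  show "convex hull (B \<union> T) \<subseteq> P"
    using face_of_imp_subset[OF BP] face_of_imp_subset[OF TP] convP by (simp add: hull_minimal)
qed

lemma P_rep: "P = {u *\<^sub>R s + v *\<^sub>R t | u v s t. u \<ge> 0 \<and> v \<ge> 0 \<and> u + v = 1 \<and> s \<in> B \<and> t \<in> T}"
  using P_hull convex_hull_union_two[OF convB B_ne convT T_ne] by simp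

lemma key_face:
  assumes V: "V face_of P" and ne1: "V \<inter> B \<noteq> {}" and ne2: "V \<inter> T \<noteq> {}"
  shows "f (V \<inter> T) = shj j (f (V \<inter> B))"
proof -
  have 1: "f (V \<inter> B) = f V \<inter> Q" using f_meet[OF V BP] fB by simp
  have 2: "f (V \<inter> T) = f V \<inter> shj j Q" using f_meet[OF V TP] fT by simp
  have "f V \<inter> Q \<noteq> {}" using 1 f_ne ne1 face_of_Int[OF V BP] by metis
  moreover have "f V \<inter> shj j Q \<noteq> {}" using 2 f_ne ne2 face_of_Int[OF V TP] by metis
  ultimately show ?thesis using prism_face[OF Qj fface[OF V]] 1 2 by simp
qed

end

definition amax :: "(real^'d) set \<Rightarrow> real^'d \<Rightarrow> (real^'d) set" where
  "amax X c = {x\<in>X. \<forall>y\<in>X. inner c y \<le> inner c x}"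

lemma amax_sub: "amax X c \<subseteq> X" by (auto simp: amax_def)
lemma amax_le: "x \<in> amax X c \<Longrightarrow> y \<in> X \<Longrightarrow> inner c y \<le> inner c x" by (auto simp: amax_def)
lemma amax_in: "x \<in> X \<Longrightarrow> (\<And>y. y \<in> X \<Longrightarrow> inner c y \<le> inner c x) \<Longrightarrow> x \<in> amax X c" by (auto simp: amax_def)

lemma amax_ne: assumes "compact X" "X \<noteq> {}" shows "amax X c \<noteq> {}"
proof -
  have "continuous_on X (\<lambda>x. inner c x)" by (intro continuous_intros)
  then obtain x where "x \<in> X" "\<forall>y\<in>X. inner c y \<le> inner c x"
    using continuous_attains_sup[OF assms] by blast
  then show ?thesis unfolding amax_def by blast
qed

lemma amax_face: assumes "convex X" shows "amax X c face_of X"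
proof (cases "amax X c = {}")
  case True then show ?thesis by simp
next
  case False
  then obtain x0 where x0: "x0 \<in> amax X c" by auto
  have eq: "amax X c = X \<inter> {x. inner c x = inner c x0}"
  proof (intro set_eqI iffI)
    fix x assume x: "x \<in> amax X c"
    then have "inner c x0 \<le> inner c x" "inner c x \<le> inner c x0" using x0 unfolding amax_def by auto
    then show "x \<in> X \<inter> {x. inner c x = inner c x0}" using x amax_sub by fastforce
  next
    fix x assume "x \<in> X \<inter> {x. inner c x = inner c x0}"
    then show "x \<in> amax X c" using x0 unfolding amax_def by auto
  qed
  show ?thesis unfolding eq
    by (rule face_of_Int_supporting_hyperplane_le[OF assms]) (use x0 in \<open>auto simp: amax_def\<close>)
qed

lemma normal_cone_amax:
  "normal_cone X (amax X c) = {c'. amax X c \<subseteq> amax X c'}"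
  unfolding normal_cone_def amax_def by auto

lemma exposed_amax:
  assumes "polytope X" "F face_of X" "F \<noteq> {}" shows "\<exists>c. F = amax X c"
proof -
  have "F exposed_face_of X" using assms exposed_face_of_polyhedron polytope_imp_polyhedron by blast
  then obtain a b where ab: "X \<subseteq> {x. a \<bullet> x \<le> b}" "F = X \<inter> {x. a \<bullet> x = b}"
    unfolding exposed_face_of_def by blast
  obtain x0 where "x0 \<in> F" using assms by auto
  then have "F = amax X a" using ab unfolding amax_def by (auto, fastforce) 
  then show ?thesis by blast
qed

lemma fan_amax:
  assumes "polytope X" "X \<noteq> {}"
  shows "normal_fan X = {{c'. amax X c \<subseteq> amax X c'} | c. True}"
proof -
  have "normal_fan X = {normal_cone X (amax X c) | c. True}"
    unfolding normal_fan_def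
  proof (intro set_eqI iffI)
    fix N assume "N \<in> {normal_cone X F |F. F face_of X \<and> F \<noteq> {}}"
    then obtain F where "N = normal_cone X F" "F face_of X" "F \<noteq> {}" by blast
    then show "N \<in> {normal_cone X (amax X c) | c. True}" using exposed_amax[OF assms(1)] by blast
  next
    fix N assume "N \<in> {normal_cone X (amax X c) | c. True}"
    then obtain c where "N = normal_cone X (amax X c)" by blast
    moreover have "amax X c face_of X" using amax_face polytope_imp_convex assms by blast
    moreover have "amax X c \<noteq> {}" using amax_ne polytope_imp_compact assms by blast
    ultimately show "N \<in> {normal_cone X F |F. F face_of X \<and> F \<noteq> {}}" by blast
  qed
  then show ?thesis by (simp add: normal_cone_amax)
qed

lemma shj_sub_iff: "shj j X \<subseteq> shj j Y \<longleftrightarrow> X \<subseteq> Y"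
  unfolding shj_def by auto

lemma linear_scale: "linear (\<lambda>x::real^'d. a *\<^sub>R x)"
  by (simp add: linear_iff algebra_simps)

context prsm begin


lemma inner_axk: "inner (c + l *\<^sub>R axis k 1) x = inner c x + l * x $ k"
  by (simp add: inner_add_left inner_axis')

lemma V_exists: "\<exists>V. V face_of P \<and> V \<inter> B = amax B c \<and> V \<inter> T = amax T c \<and>
   V \<subseteq> convex hull (amax B c \<union> amax T c)"
proof -
  obtain yB where yB: "yB \<in> amax B c" using amax_ne[OF compB B_ne] by blast
  obtain zT where zT: "zT \<in> amax T c" using amax_ne[OF compT T_ne] by blast
  define mB where "mB = inner c yB"
  define mT where "mT = inner c zT"
  define l where "l = (mB - mT) / hh"
  define c2 where "c2 = c + l *\<^sub>R axis k 1"
  define M where "M = mB + l * bb"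
  have hB: "inner c2 x = inner c x + l * bb" if "x \<in> B" for x
    using that Bh unfolding c2_def inner_axk by auto
  have hT: "inner c2 x = inner c x - mT + M" if "x \<in> T" for x
  proof -
    have lh: "l * hh = mB - mT" using hpos by (simp add: l_def)
    have "x $ k = bb + hh" using that Th by auto
    then show ?thesis unfolding c2_def inner_axk M_def using lh by (simp add: algebra_simps)
  qed
  have leB: "inner c x \<le> mB" if "x \<in> B" for x using amax_le[OF yB that] unfolding mB_def .
  have leT: "inner c x \<le> mT" if "x \<in> T" for x using amax_le[OF zT that] unfolding mT_def .
  have le: "inner c2 x \<le> M" if "x \<in> P" for x
  proof -
    have "x \<in> {u *\<^sub>R s + v *\<^sub>R t | u v s t. u \<ge> 0 \<and> v \<ge> 0 \<and> u + v = 1 \<and> s \<in> B \<and> t \<in> T}"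
      using that P_rep by simp
    then obtain u v s t where uv: "u \<ge> 0" "v \<ge> 0" "u + v = 1" "s \<in> B" "t \<in> T" "x = u *\<^sub>R s + v *\<^sub>R t"
      by auto
    have "inner c2 x = u * inner c2 s + v * inner c2 t" using uv by (simp add: inner_add_right)
    also have "\<dots> \<le> u * M + v * M"
    proof -
      have 1: "inner c2 s \<le> M" using hB[OF uv(4)] leB[OF uv(4)] unfolding M_def by linarith
      have 2: "inner c2 t \<le> M" using hT[OF uv(5)] leT[OF uv(5)] by linarith
      show ?thesis using mult_left_mono[OF 1 uv(1)] mult_left_mono[OF 2 uv(2)] by linarith
    qed
    also have "\<dots> = M" using uv(3) by (metis distrib_right mult_1)
    finally show ?thesis .
  qed
  define V where "V = P \<inter> {x. inner c2 x = M}"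
  have V: "V face_of P" unfolding V_def by (rule face_of_Int_supporting_hyperplane_le[OF convP le])
  have PB: "B \<subseteq> P" "T \<subseteq> P" using face_of_imp_subset BP TP by auto
  have VB: "V \<inter> B = amax B c"
  proof (intro set_eqI iffI)
    fix x assume x: "x \<in> V \<inter> B"
    then have "inner c2 x = M" "x \<in> B" unfolding V_def by auto
    then have "inner c x = mB" using hB unfolding M_def by simp
    then show "x \<in> amax B c" using x leB by (intro amax_in) auto
  next
    fix x assume x: "x \<in> amax B c"
    have xB: "x \<in> B" using x amax_sub by blast
    have "mB \<le> inner c x" using amax_le[OF x] amax_sub yB unfolding mB_def by blast
    then have "inner c x = mB" using leB[OF xB] by linarith
    then have "inner c2 x = M" using hB[OF xB] unfolding M_def by simp
    then show "x \<in> V \<inter> B" using xB PB unfolding V_def by blast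
  qed
  have VT: "V \<inter> T = amax T c"
  proof (intro set_eqI iffI)
    fix x assume x: "x \<in> V \<inter> T"
    then have "inner c2 x = M" "x \<in> T" unfolding V_def by auto
    then have "inner c x = mT" using hT by simp
    then show "x \<in> amax T c" using x leT by (intro amax_in) auto
  next
    fix x assume x: "x \<in> amax T c"
    have xB: "x \<in> T" using x amax_sub by blast
    have "mT \<le> inner c x" using amax_le[OF x] amax_sub zT unfolding mT_def by blast
    then have "inner c x = mT" using leT[OF xB] by linarith
    then have "inner c2 x = M" using hT[OF xB] by simp
    then show "x \<in> V \<inter> T" using xB PB unfolding V_def by blast
  qed
  have VH: "V \<subseteq> convex hull (amax B c \<union> amax T c)"
  proof
    fix x assume xV: "x \<in> V"
    then have xP: "x \<in> P" and xM: "inner c2 x = M" unfolding V_def by auto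
    have "x \<in> {u *\<^sub>R s + v *\<^sub>R t | u v s t. u \<ge> 0 \<and> v \<ge> 0 \<and> u + v = 1 \<and> s \<in> B \<and> t \<in> T}"
      using xP P_rep by simp
    then obtain u v s t where uv: "u \<ge> 0" "v \<ge> 0" "u + v = 1" "s \<in> B" "t \<in> T" "x = u *\<^sub>R s + v *\<^sub>R t"
      by auto
    have 1: "inner c2 s \<le> M" using hB[OF uv(4)] leB[OF uv(4)] unfolding M_def by linarith
    have 2: "inner c2 t \<le> M" using hT[OF uv(5)] leT[OF uv(5)] by linarith
    have sum: "u * inner c2 s + v * inner c2 t = M" using xM uv(6) by (simp add: inner_add_right)
    have sV: "s \<in> amax B c" if "u > 0"
    proof -
      have "inner c2 s = M"
      proof (rule ccontr)
        assume "inner c2 s \<noteq> M"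
        then have "inner c2 s < M" using 1 by simp
        then have "u * inner c2 s < u * M" using that by simp
        moreover have "v * inner c2 t \<le> v * M" using mult_left_mono[OF 2 uv(2)] .
        ultimately have "u * inner c2 s + v * inner c2 t < (u + v) * M" by (simp add: distrib_right)
        then show False using sum uv(3) by simp
      qed
      then have "s \<in> V \<inter> B" using uv(4) PB unfolding V_def by blast
      then show ?thesis using VB by simp
    qed
    have tV: "t \<in> amax T c" if "v > 0"
    proof -
      have "inner c2 t = M"
      proof (rule ccontr)
        assume "inner c2 t \<noteq> M"
        then have "inner c2 t < M" using 2 by simp
        then have "v * inner c2 t < v * M" using that by simp
        moreover have "u * inner c2 s \<le> u * M" using mult_left_mono[OF 1 uv(1)] .
        ultimately have "u * inner c2 s + v * inner c2 t < (u + v) * M" by (simp add: distrib_right)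
        then show False using sum uv(3) by simp
      qed
      then have "t \<in> V \<inter> T" using uv(5) PB unfolding V_def by blast
      then show ?thesis using VT by simp
    qed
    let ?H = "convex hull (amax B c \<union> amax T c)"
    consider "u = 0" | "v = 0" | "u > 0 \<and> v > 0" using uv(1,2) by linarith
    then show "x \<in> ?H"
    proof cases
      case 1
      then have "v = 1" "x = t" using uv by auto
      then show ?thesis using tV hull_inc[of t] by simp
    next
      case 2
      then have "u = 1" "x = s" using uv by auto
      then show ?thesis using sV hull_inc[of s] by simp
    next
      case 3
      have "s \<in> ?H" "t \<in> ?H" using sV tV 3 hull_inc by (metis UnI1, metis UnI2)
      then show ?thesis using convexD[OF convex_convex_hull] uv by metis
    qed
  qed
  show ?thesis using V VB VT VH by blast
qed

lemma J: "f (amax T c) = shj j (f (amax B c))"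
proof -
  obtain V where V: "V face_of P" "V \<inter> B = amax B c" "V \<inter> T = amax T c"
    using V_exists by blast
  have "V \<inter> B \<noteq> {}" "V \<inter> T \<noteq> {}" using V amax_ne compB compT B_ne T_ne by auto
  then show ?thesis using key_face[OF V(1)] V by simp
qed

lemma amaxB_face: "amax B c face_of P" using face_of_trans[OF amax_face[OF convB] BP] .
lemma amaxT_face: "amax T c face_of P" using face_of_trans[OF amax_face[OF convT] TP] .

lemma K: "amax B c \<subseteq> amax B c' \<longleftrightarrow> amax T c \<subseteq> amax T c'"
  using ordD[OF amaxB_face amaxB_face] ordD[OF amaxT_face amaxT_face] J shj_sub_iff by metis

lemma fan_BT: "normal_fan B = normal_fan T"
  using fan_amax[OF polyB B_ne] fan_amax[OF polyT T_ne] K by simp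

end

definition sl :: "(real^'d) set \<Rightarrow> (real^'d) set \<Rightarrow> real \<Rightarrow> (real^'d) set" where
  "sl B T t = {(1 - t) *\<^sub>R y + t *\<^sub>R z | y z. y \<in> B \<and> z \<in> T}"

lemma hyp_k: "{x::real^'d. x $ k = r} = {x. inner (axis k 1) x = r}"
  by (simp add: inner_axis')

lemma sl_mem: "y \<in> B \<Longrightarrow> z \<in> T \<Longrightarrow> (1 - t) *\<^sub>R y + t *\<^sub>R z \<in> sl B T t"
  unfolding sl_def by blast

lemma sl_cases: "x \<in> sl B T t \<Longrightarrow> (\<And>y z. y \<in> B \<Longrightarrow> z \<in> T \<Longrightarrow> x = (1 - t) *\<^sub>R y + t *\<^sub>R z \<Longrightarrow> thesis) \<Longrightarrow> thesis"
  unfolding sl_def by blast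

lemma amax_sl:
  assumes t: "0 < t" "t < 1" and y: "y \<in> B" and z: "z \<in> T"
  shows "(1 - t) *\<^sub>R y + t *\<^sub>R z \<in> amax (sl B T t) c \<longleftrightarrow> y \<in> amax B c \<and> z \<in> amax T c"
proof
  assume a: "(1 - t) *\<^sub>R y + t *\<^sub>R z \<in> amax (sl B T t) c"
  have "inner c y' \<le> inner c y" if "y' \<in> B" for y'
  proof -
    have "inner c ((1 - t) *\<^sub>R y' + t *\<^sub>R z) \<le> inner c ((1 - t) *\<^sub>R y + t *\<^sub>R z)"
      using amax_le[OF a sl_mem[OF that z]] .
    then have "(1 - t) * inner c y' \<le> (1 - t) * inner c y" by (simp add: inner_add_right)
    then show ?thesis using t by simp
  qed
  moreover have "inner c z' \<le> inner c z" if "z' \<in> T" for z'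
  proof -
    have "inner c ((1 - t) *\<^sub>R y + t *\<^sub>R z') \<le> inner c ((1 - t) *\<^sub>R y + t *\<^sub>R z)"
      using amax_le[OF a sl_mem[OF y that]] .
    then have "t * inner c z' \<le> t * inner c z" by (simp add: inner_add_right)
    then show ?thesis using t by simp
  qed
  ultimately show "y \<in> amax B c \<and> z \<in> amax T c" using y z by (auto intro: amax_in)
next
  assume a: "y \<in> amax B c \<and> z \<in> amax T c"
  show "(1 - t) *\<^sub>R y + t *\<^sub>R z \<in> amax (sl B T t) c"
  proof (rule amax_in[OF sl_mem[OF y z]])
    fix x assume "x \<in> sl B T t"
    then obtain y' z' where yz: "y' \<in> B" "z' \<in> T" "x = (1 - t) *\<^sub>R y' + t *\<^sub>R z'" by (rule sl_cases)
    have 1: "inner c y' \<le> inner c y" using amax_le a yz by blast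
    have 2: "inner c z' \<le> inner c z" using amax_le a yz by blast
    have "(1 - t) * inner c y' + t * inner c z' \<le> (1 - t) * inner c y + t * inner c z"
      using mult_left_mono[OF 1, of "1 - t"] mult_left_mono[OF 2, of t] t by linarith
    then show "inner c x \<le> inner c ((1 - t) *\<^sub>R y + t *\<^sub>R z)" using yz by (simp add: inner_add_right)
  qed
qed

lemma sl_incl:
  assumes t: "0 < t" "t < 1" and cB: "compact B" "B \<noteq> {}" and cT: "compact T" "T \<noteq> {}"
  shows "amax (sl B T t) c \<subseteq> amax (sl B T t) c' \<longleftrightarrow> amax B c \<subseteq> amax B c' \<and> amax T c \<subseteq> amax T c'"
proof
  assume a: "amax (sl B T t) c \<subseteq> amax (sl B T t) c'"
  obtain y0 where y0: "y0 \<in> amax B c" using amax_ne[OF cB] by blast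
  obtain z0 where z0: "z0 \<in> amax T c" using amax_ne[OF cT] by blast
  have y0B: "y0 \<in> B" and z0T: "z0 \<in> T" using y0 z0 amax_sub by blast+
  show "amax B c \<subseteq> amax B c' \<and> amax T c \<subseteq> amax T c'"
  proof
    show "amax B c \<subseteq> amax B c'"
    proof
      fix y assume y: "y \<in> amax B c"
      then have yB: "y \<in> B" using amax_sub by blast
      have "(1 - t) *\<^sub>R y + t *\<^sub>R z0 \<in> amax (sl B T t) c" using amax_sl[OF t yB z0T] y z0 by blast
      then have "(1 - t) *\<^sub>R y + t *\<^sub>R z0 \<in> amax (sl B T t) c'" using a by blast
      then show "y \<in> amax B c'" using amax_sl[OF t yB z0T] by blast
    qed
    show "amax T c \<subseteq> amax T c'"
    proof
      fix z assume z: "z \<in> amax T c"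
      then have zT: "z \<in> T" using amax_sub by blast
      have "(1 - t) *\<^sub>R y0 + t *\<^sub>R z \<in> amax (sl B T t) c" using amax_sl[OF t y0B zT] y0 z by blast
      then have "(1 - t) *\<^sub>R y0 + t *\<^sub>R z \<in> amax (sl B T t) c'" using a by blast
      then show "z \<in> amax T c'" using amax_sl[OF t y0B zT] by blast
    qed
  qed
next
  assume a: "amax B c \<subseteq> amax B c' \<and> amax T c \<subseteq> amax T c'"
  show "amax (sl B T t) c \<subseteq> amax (sl B T t) c'"
  proof
    fix x assume x: "x \<in> amax (sl B T t) c"
    then have "x \<in> sl B T t" using amax_sub by blast
    then obtain y z where yz: "y \<in> B" "z \<in> T" "x = (1 - t) *\<^sub>R y + t *\<^sub>R z" by (rule sl_cases)
    then have "y \<in> amax B c" "z \<in> amax T c" using amax_sl[OF t yz(1,2)] x by auto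
    then have "y \<in> amax B c'" "z \<in> amax T c'" using a by auto
    then show "x \<in> amax (sl B T t) c'" using amax_sl[OF t yz(1,2)] yz(3) by blast
  qed
qed

context prsm begin

lemma slice_eq:
  assumes t: "0 \<le> t" "t \<le> 1"
  shows "P \<inter> {x. x $ k = bb + t * hh} = sl B T t"
proof (intro set_eqI iffI)
  fix x assume x: "x \<in> P \<inter> {x. x $ k = bb + t * hh}"
  then have "x \<in> {u *\<^sub>R s + v *\<^sub>R t | u v s t. u \<ge> 0 \<and> v \<ge> 0 \<and> u + v = 1 \<and> s \<in> B \<and> t \<in> T}"
    using P_rep by blast
  then obtain u v s w where uv: "u \<ge> 0" "v \<ge> 0" "u + v = 1" "s \<in> B" "w \<in> T" "x = u *\<^sub>R s + v *\<^sub>R w"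
    by auto
  have "s $ k = bb" "w $ k = bb + hh" using uv Bh Th by auto
  then have "x $ k = u * bb + v * (bb + hh)" using uv by simp
  also have "\<dots> = (u + v) * bb + v * hh" by (simp add: algebra_simps)
  also have "\<dots> = bb + v * hh" using uv(3) by simp
  finally have "v * hh = t * hh" using x by simp
  then have "v = t" using hpos by simp
  then have "u = 1 - t" using uv(3) by simp
  then show "x \<in> sl B T t" using sl_mem[OF uv(4,5), of t] uv(6) \<open>v = t\<close> by simp
next
  fix x assume "x \<in> sl B T t"
  then obtain y z where yz: "y \<in> B" "z \<in> T" "x = (1 - t) *\<^sub>R y + t *\<^sub>R z" by (rule sl_cases)
  have "x \<in> {u *\<^sub>R s + v *\<^sub>R w | u v s w. u \<ge> 0 \<and> v \<ge> 0 \<and> u + v = 1 \<and> s \<in> B \<and> w \<in> T}"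
    using yz t by (intro CollectI exI[of _ "1-t"] exI[of _ t] exI[of _ y] exI[of _ z]) simp
  then have "x \<in> P" using P_rep by simp
  moreover have "y $ k = bb" "z $ k = bb + hh" using yz Bh Th by auto
  then have "x $ k = (1 - t) * bb + t * (bb + hh)" using yz(3) by simp
  then have "x $ k = bb + t * hh" by (simp add: algebra_simps)
  ultimately show "x \<in> P \<inter> {x. x $ k = bb + t * hh}" by blast
qed

lemma sl0: "sl B T 0 = B"
  using T_ne unfolding sl_def by auto
lemma sl1: "sl B T 1 = T"
  using B_ne unfolding sl_def by auto

lemma poly_slice: "polytope (P \<inter> {x. x $ k = r})"
  unfolding hyp_k by (intro polytope_Int_polyhedron polyP polyhedron_hyperplane)

lemma fan_sl:
  assumes t: "0 \<le> t" "t \<le> 1" shows "normal_fan (sl B T t) = normal_fan B"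
proof -
  consider "t = 0" | "t = 1" | "0 < t \<and> t < 1" using t by linarith
  then show ?thesis
  proof cases
    case 1 then show ?thesis using sl0 by simp
  next
    case 2 then show ?thesis using sl1 fan_BT by simp
  next
    case 3
    have p: "polytope (sl B T t)" using poly_slice slice_eq[OF t] by metis
    have ne: "sl B T t \<noteq> {}" using B_ne T_ne sl_mem by blast
    show ?thesis
      unfolding fan_amax[OF p ne] fan_amax[OF polyB B_ne]
      using sl_incl[OF conjunct1[OF 3] conjunct2[OF 3] compB B_ne compT T_ne] K by simp
  qed
qed

end

lemma aff_aux:
  fixes B T P :: "(real^'d) set"
  assumes lin: "lin_dir B = lin_dir T" and w0: "w0 \<in> T" and PH: "P \<subseteq> convex hull (B \<union> T)"
  shows "aff_dim P \<le> aff_dim B + 1"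
proof -
  let ?A = "affine hull (insert w0 B)"
  have aA: "affine ?A" by simp
  have TA: "T \<subseteq> ?A"
  proof
    fix x assume x: "x \<in> T"
    have "x \<in> affine hull T" "w0 \<in> affine hull T" using x w0 by (simp_all add: hull_inc)
    then have "x - w0 \<in> lin_dir T" unfolding lin_dir_def by blast
    then have "x - w0 \<in> lin_dir B" using lin by simp
    then obtain y z where yz: "y \<in> affine hull B" "z \<in> affine hull B" "x - w0 = y - z"
      unfolding lin_dir_def by blast
    have "affine hull B \<subseteq> ?A" by (simp add: hull_mono subset_insertI)
    then have "y \<in> ?A" "z \<in> ?A" using yz by auto
    moreover have "w0 \<in> ?A" by (simp add: hull_inc)
    ultimately have "w0 + 1 *\<^sub>R (y - z) \<in> ?A" using mem_affine_3_minus[OF aA] by blast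
    moreover have "w0 + 1 *\<^sub>R (y - z) = x" using yz(3) by (simp add: algebra_simps)
    ultimately show "x \<in> ?A" by simp
  qed
  have BA: "B \<subseteq> ?A" by (meson hull_subset subset_insertI subset_trans)
  have "convex hull (B \<union> T) \<subseteq> ?A"
  proof -
    have "affine hull (B \<union> T) \<subseteq> ?A" by (rule hull_minimal) (use BA TA in auto)
    then show ?thesis by (rule order_trans[OF convex_hull_subset_affine_hull])
  qed
  then have "P \<subseteq> ?A" using PH by blast
  then have "aff_dim P \<le> aff_dim ?A" by (rule aff_dim_subset)
  also have "\<dots> = aff_dim (insert w0 B)" by simp
  also have "\<dots> \<le> aff_dim B + 1" by (simp add: aff_dim_insert)
  finally show ?thesis .
qed

context prsm begin

lemma affB: "aff_dim B \<ge> int CARD('d) - 1"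
proof -
  obtain w0 where w0: "w0 \<in> T" using T_ne by blast
  have "aff_dim P \<le> aff_dim B + 1" by (rule aff_aux[OF lin w0]) (simp add: P_hull)
  then show ?thesis using dimP by simp
qed

lemma affT: "aff_dim T \<ge> int CARD('d) - 1"
proof -
  obtain w0 where w0: "w0 \<in> B" using B_ne by blast
  have "aff_dim P \<le> aff_dim T + 1" by (rule aff_aux[OF lin[symmetric] w0]) (simp add: P_hull Un_commute)
  then show ?thesis using dimP by simp
qed

lemma aff_sl:
  assumes t: "0 \<le> t" "t \<le> 1" shows "aff_dim (sl B T t) = int CARD('d) - 1"
proof (rule antisym)
  have "sl B T t \<subseteq> {x. inner (axis k 1) x = bb + t * hh}"
    using slice_eq[OF t] hyp_k by blast
  then have "aff_dim (sl B T t) \<le> aff_dim {x::real^'d. inner (axis k 1) x = bb + t * hh}"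
    by (rule aff_dim_subset)
  also have "\<dots> = int CARD('d) - 1" by (simp add: axis_eq_0_iff)
  finally show "aff_dim (sl B T t) \<le> int CARD('d) - 1" .
next
  show "int CARD('d) - 1 \<le> aff_dim (sl B T t)"
  proof (cases "t = 1")
    case True then show ?thesis using sl1 affT by simp
  next
    case False
    then have t1: "1 - t \<noteq> 0" by simp
    obtain z0 where z0: "z0 \<in> T" using T_ne by blast
    have "(\<lambda>y. (1 - t) *\<^sub>R y + t *\<^sub>R z0) ` B \<subseteq> sl B T t" using sl_mem z0 by blast
    moreover have "(\<lambda>y. (1 - t) *\<^sub>R y + t *\<^sub>R z0) ` B = (+) (t *\<^sub>R z0) ` ((\<lambda>y. (1 - t) *\<^sub>R y) ` B)"
      by (auto simp: image_image add.commute)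
    moreover have "aff_dim ((+) (t *\<^sub>R z0) ` ((\<lambda>y. (1 - t) *\<^sub>R y) ` B)) = aff_dim B"
      unfolding aff_dim_translation_eq
      by (rule aff_dim_injective_linear_image[OF linear_scale]) (use t1 in \<open>auto simp: inj_on_def\<close>)
    ultimately have "aff_dim B \<le> aff_dim (sl B T t)" using aff_dim_subset by metis
    then show ?thesis using affB by simp
  qed
qed

end

lemma dep_test: "independent (S::(real^'d) set) \<Longrightarrow> a \<in> S \<Longrightarrow> a \<notin> span (S - {a})"
  using dependent_def by blast

lemma scale_solve: fixes a b :: "real^'d"
  assumes "(t::real) \<noteq> 0" "t *\<^sub>R a = s *\<^sub>R b" shows "a = (s / t) *\<^sub>R b"
proof -
  have "a = ((1/t) * t) *\<^sub>R a" using assms(1) by simp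
  also have "\<dots> = (1/t) *\<^sub>R (t *\<^sub>R a)" by (simp only: scaleR_scaleR)
  also have "\<dots> = (1/t) *\<^sub>R (s *\<^sub>R b)" using assms(2) by simp
  also have "\<dots> = (s / t) *\<^sub>R b" by simp
  finally show ?thesis .
qed

lemma lattice_axis: "lattice_pt (axis k (1::real))"
  unfolding lattice_pt_def axis_def by auto

lemma lattice_add_mult: "lattice_pt v \<Longrightarrow> lattice_pt u \<Longrightarrow> lattice_pt (v + real n *\<^sub>R u)"
  unfolding lattice_pt_def by auto

context prsm begin

lemma P_low: "y \<in> P \<Longrightarrow> bb \<le> y $ k"
proof -
  assume "y \<in> P"
  then have "y \<in> {u *\<^sub>R s + v *\<^sub>R t | u v s t. u \<ge> 0 \<and> v \<ge> 0 \<and> u + v = 1 \<and> s \<in> B \<and> t \<in> T}"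
    using P_rep by simp
  then obtain u v s w where uv: "u \<ge> 0" "v \<ge> 0" "u + v = 1" "s \<in> B" "w \<in> T" "y = u *\<^sub>R s + v *\<^sub>R w"
    by auto
  have "s $ k = bb" "w $ k = bb + hh" using uv Bh Th by auto
  then have "y $ k = u * bb + v * (bb + hh)" using uv by simp
  also have "\<dots> = (u + v) * bb + v * hh" by (simp add: algebra_simps)
  also have "\<dots> = bb + v * hh" using uv(3) by simp
  finally show ?thesis using uv(2) hpos by simp
qed

lemma line_pts:
  assumes e: "e face_of P" "aff_dim e = 1" and v: "v \<in> e" "v \<in> B" and w: "w \<in> e" "w \<in> T"
  shows "e \<subseteq> affine hull {v, w}" "e \<inter> B = {v}" "e \<inter> T = {w}"
proof -
  have vk: "v $ k = bb" "w $ k = bb + hh" using v w Bh Th by auto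
  then have vw: "v \<noteq> w" using hpos by auto
  have sub: "affine hull {v, w} \<subseteq> affine hull e" using v w by (intro hull_mono) auto
  have "aff_dim (affine hull {v, w}) = aff_dim (affine hull e)" using vw e by simp
  moreover have ne: "affine hull {v, w} \<noteq> {}" by simp
  ultimately have eq: "affine hull {v, w} = affine hull e"
    using affine_dim_equal[OF affine_affine_hull affine_affine_hull ne sub] by simp
  have "e \<subseteq> affine hull e" by (rule hull_subset)
  then show esub: "e \<subseteq> affine hull {v, w}" using eq by simp
  have rep: "\<exists>a b. a + b = 1 \<and> y = a *\<^sub>R v + b *\<^sub>R w \<and> y $ k = bb + b * hh" if yy: "y \<in> e" for y
  proof -
    have "y \<in> {u *\<^sub>R v + va *\<^sub>R w |u va. u + va = 1}" using esub yy unfolding affine_hull_2 by blast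
    then obtain a b where ab: "a + b = 1" "y = a *\<^sub>R v + b *\<^sub>R w" by blast
    have "y $ k = a * bb + b * (bb + hh)" using ab vk by simp
    also have "\<dots> = (a + b) * bb + b * hh" by (simp add: algebra_simps)
    finally show ?thesis using ab by auto
  qed
  show "e \<inter> B = {v}"
  proof (intro set_eqI iffI)
    fix y assume y: "y \<in> e \<inter> B"
    then obtain a b where ab: "a + b = 1" "y = a *\<^sub>R v + b *\<^sub>R w" "y $ k = bb + b * hh" using rep by blast
    have "y $ k = bb" using y Bh by auto
    then have "b = 0" using ab hpos by simp
    then show "y \<in> {v}" using ab by simp
  qed (use v in auto)
  show "e \<inter> T = {w}"
  proof (intro set_eqI iffI)
    fix y assume y: "y \<in> e \<inter> T"
    then obtain a b where ab: "a + b = 1" "y = a *\<^sub>R v + b *\<^sub>R w" "y $ k = bb + b * hh" using rep by blast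
    have "y $ k = bb + hh" using y Th by auto
    then have "b = 1" using ab hpos by simp
    then show "y \<in> {w}" using ab by simp
  qed (use w in auto)
qed

end

locale prsm_sm = prsm +
  fixes hn :: nat
  assumes smooth: "smooth_polytope P" and hn: "hh = real hn"
begin

lemma ext_lattice: "v extreme_point_of P \<Longrightarrow> lattice_pt v"
proof -
  assume v: "v extreme_point_of P"
  obtain V where V: "finite V" "\<forall>v\<in>V. lattice_pt v" "P = convex hull V"
    using smooth unfolding smooth_polytope_def lattice_polytope_def by blast
  then show ?thesis using v extreme_point_of_convex_hull by metis
qed


lemma L:
  assumes cv: "amax B c = {v}" and cw: "amax T c = {w}"
  shows "\<exists>u. lattice_pt u \<and> w = v + hh *\<^sub>R u"
proof -
  obtain V where V: "V face_of P" "V \<inter> B = {v}" "V \<inter> T = {w}" "V \<subseteq> convex hull ({v} \<union> {w})"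
    using V_exists[of c] cv cw by auto
  have vB: "v \<in> B" and wT: "w \<in> T" and vV: "v \<in> V" and wV: "w \<in> V" using V(2,3) by auto
  have vk: "v $ k = bb" "w $ k = bb + hh" using vB wT Bh Th by auto
  then have vw: "v \<noteq> w" using hpos by auto
  have Vseg: "V \<subseteq> closed_segment v w" using V(4) by (simp add: segment_convex_hull insert_commute)
  have affV: "aff_dim V = 1"
  proof (rule antisym)
    have "aff_dim V \<le> aff_dim (convex hull {v, w})" using V(4) aff_dim_subset by (metis insert_is_Un)
    then show "aff_dim V \<le> 1" using vw by (simp add: aff_dim_convex_hull)
    have "aff_dim {v, w} \<le> aff_dim V" using vV wV by (intro aff_dim_subset) auto
    then show "1 \<le> aff_dim V" using vw by simp
  qed
  have vface: "{v} face_of P" using amaxB_face[of c] cv by simp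
  have wface: "{w} face_of P" using amaxT_face[of c] cw by simp
  have vert: "is_vertex P v" using vface is_vertex_def by blast
  have eV: "V \<in> edges_at P v" unfolding edges_at_def is_edge_def using V(1) affV vV by blast
  obtain dir where d1: "\<forall>e\<in>edges_at P v. prim_dir v e (dir e)" and d2: "inj_on dir (edges_at P v)"
    and d3: "lattice_basis (dir ` edges_at P v)"
    using smooth vert unfolding smooth_polytope_def by blast
  define U where "U = dir ` edges_at P v"
  define u0 where "u0 = dir V"
  have u0U: "u0 \<in> U" using eV unfolding U_def u0_def by blast
  have pu0: "prim_dir v V u0" using d1 eV unfolding u0_def by blast
  then obtain t where t: "t > 0" "v + t *\<^sub>R u0 \<in> V" and u0ne: "u0 \<noteq> 0" and u0lat: "lattice_pt u0"
    unfolding prim_dir_def by blast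
  have "v + t *\<^sub>R u0 \<in> closed_segment v w" using Vseg t(2) by blast
  then obtain s where s: "0 \<le> s" "s \<le> 1" "v + t *\<^sub>R u0 = (1 - s) *\<^sub>R v + s *\<^sub>R w"
    unfolding in_segment by blast
  have "t *\<^sub>R u0 = s *\<^sub>R (w - v)" using s(3) by (simp add: algebra_simps)
  then have u0eq: "u0 = (s / t) *\<^sub>R (w - v)" using t(1) scale_solve[of t u0 s "w - v"] by simp
  define \<alpha> where "\<alpha> = s / t"
  have "\<alpha> \<noteq> 0" using u0eq u0ne unfolding \<alpha>_def by auto
  then have apos: "\<alpha> > 0" using s t unfolding \<alpha>_def by simp
  have u0eq': "u0 = \<alpha> *\<^sub>R (w - v)" using u0eq unfolding \<alpha>_def .
  have u0k: "u0 $ k = \<alpha> * hh" using u0eq' vk by simp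
  have indep: "independent U" using d3 unfolding lattice_basis_def U_def by blast
  have finU: "finite U" using d3 unfolding lattice_basis_def U_def by blast
  have other: "dir e' $ k = 0" if e': "e' \<in> edges_at P v" "e' \<noteq> V" for e'
  proof (rule ccontr)
    assume nz: "dir e' $ k \<noteq> 0"
    define u' where "u' = dir e'"
    have "prim_dir v e' u'" using d1 e' unfolding u'_def by blast
    then obtain t' where t': "t' > 0" "v + t' *\<^sub>R u' \<in> e'" and u'ne: "u' \<noteq> 0"
      unfolding prim_dir_def by blast
    have e'f: "e' face_of P" "aff_dim e' = 1" "v \<in> e'" using e' unfolding edges_at_def is_edge_def by auto
    define x where "x = v + t' *\<^sub>R u'"
    have "x $ k \<noteq> bb" using nz t'(1) vk unfolding x_def u'_def by simp
    then have xnB: "x \<notin> B" using Bh by auto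
    have pe: "polytope e'" using face_of_polytope_polytope[OF polyP e'f(1)] .
    have "\<exists>w'. w' extreme_point_of e' \<and> w' \<notin> B"
    proof (rule ccontr)
      assume "\<not> ?thesis"
      then have "{x. x extreme_point_of e'} \<subseteq> B" by blast
      then have "convex hull {x. x extreme_point_of e'} \<subseteq> B" using convB by (simp add: hull_minimal)
      then have "e' \<subseteq> B" using Krein_Milman_Minkowski[OF polytope_imp_compact[OF pe] polytope_imp_convex[OF pe]] by simp
      then show False using xnB t'(2) unfolding x_def by blast
    qed
    then obtain w' where w': "w' extreme_point_of e'" "w' \<notin> B" by blast
    have w'e: "w' \<in> e'" and w'P: "w' extreme_point_of P" using w' extreme_point_of_face[OF e'f(1)] by auto
    have w'T: "w' \<in> T" using vertex_BT[OF w'P] w'(2) by simp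
    have l1: "e' \<inter> B = {v}" and l2: "e' \<inter> T = {w'}" and l3: "e' \<subseteq> affine hull {v, w'}"
      using line_pts[OF e'f(1,2) e'f(3) vB w'e w'T] by auto
    have "f {w'} = shj j (f {v})" using key_face[OF e'f(1)] l1 l2 by simp
    moreover have "f {w} = shj j (f {v})" using key_face[OF V(1)] V(2,3) by simp
    ultimately have "f {w'} = f {w}" by simp
    moreover have "{w'} face_of P" using w'P face_of_singleton by blast
    ultimately have "{w'} \<subseteq> {w}" using ordD[OF _ wface] by blast
    then have ww: "w' = w" by simp
    have "x \<in> affine hull {v, w}" using l3 t'(2) ww unfolding x_def by blast
    then obtain a b where ab: "a + b = 1" "x = a *\<^sub>R v + b *\<^sub>R w" unfolding affine_hull_2 by blast
    have aa: "a = 1 - b" using ab(1) by simp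
    have "a *\<^sub>R v + b *\<^sub>R w = v + b *\<^sub>R (w - v)" unfolding aa by (simp add: algebra_simps)
    then have "v + t' *\<^sub>R u' = v + b *\<^sub>R (w - v)" using ab(2) unfolding x_def by simp
    then have "t' *\<^sub>R u' = b *\<^sub>R (w - v)" by simp
    then have "u' = (b / t') *\<^sub>R (w - v)" using t'(1) scale_solve[of t' u' b "w - v"] by simp
    then have u'eq: "u' = ((b / t') / \<alpha>) *\<^sub>R u0" using u0eq' apos by simp
    have "u' \<in> span {u0}" unfolding u'eq by (simp add: span_base span_scale)
    moreover have "u0 \<noteq> u'" using d2 eV e' unfolding u0_def u'_def inj_on_def by metis
    then have "{u0} \<subseteq> U - {u'}" using u0U by auto
    ultimately have "u' \<in> span (U - {u'})" using span_mono by blast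
    moreover have "u' \<in> U" using e' unfolding U_def u'_def by blast
    ultimately show False using indep dependent_def by blast
  qed
  have "lattice_pt (axis k (1::real))" by (rule lattice_axis)
  then obtain cc where cc: "\<forall>u\<in>U. cc u \<in> \<int>" "axis k 1 = (\<Sum>u\<in>U. cc u *\<^sub>R u)"
    using d3 unfolding lattice_basis_def U_def by blast
  have zero: "u $ k = 0" if uu: "u \<in> U - {u0}" for u
  proof -
    obtain e' where "e' \<in> edges_at P v" "u = dir e'" using uu unfolding U_def by blast
    moreover have "e' \<noteq> V" using uu calculation unfolding u0_def by auto
    ultimately show ?thesis using other by simp
  qed
  have "1 = (axis k (1::real)) $ k" by simp
  also have "\<dots> = (\<Sum>u\<in>U. cc u * u $ k)" using cc(2) by simp
  also have "\<dots> = cc u0 * u0 $ k + (\<Sum>u\<in>U - {u0}. cc u * u $ k)"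
    using sum.remove[OF finU u0U] by simp
  also have "(\<Sum>u\<in>U - {u0}. cc u * u $ k) = 0" using zero by simp
  finally have prod1: "cc u0 * u0 $ k = 1" by simp
  obtain m where m: "cc u0 = of_int m" using cc(1) u0U Ints_cases by metis
  obtain n where n: "u0 $ k = of_int n" using u0lat unfolding lattice_pt_def using Ints_cases by metis
  have "n > 0" using n u0k apos hpos by (metis mult_pos_pos of_int_0_less_iff)
  moreover have "n * m = 1" using prod1 m n by (metis mult.commute of_int_eq_1_iff of_int_mult)
  ultimately have "n = 1" using pos_zmult_eq_1_iff by blast
  then have "\<alpha> * hh = 1" using n u0k by simp
  then have "hh *\<^sub>R u0 = (hh * \<alpha>) *\<^sub>R (w - v)" using u0eq' by simp
  also have "\<dots> = w - v" using \<open>\<alpha> * hh = 1\<close> by (simp add: mult.commute)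
  finally have "w = v + hh *\<^sub>R u0" by simp
  then show ?thesis using u0lat by blast
qed

end

context prsm_sm begin

lemma lat_sl:
  assumes l: "l \<le> hn" shows "lattice_polytope (sl B T (real l / hh))"
proof -
  define t where "t = real l / hh"
  have hh0: "hh > 0" using hpos .
  have t01: "0 \<le> t" "t \<le> 1" using l hn hh0 unfolding t_def by auto
  have th: "t * hh = real l" using hh0 unfolding t_def by simp
  define S where "S = sl B T t"
  have pS: "polytope S" unfolding S_def using poly_slice slice_eq[OF t01] by metis
  have ext: "lattice_pt p" if p: "p extreme_point_of S" for p
  proof -
    consider "l = 0" | "l = hn" | "0 < l \<and> l < hn" using l by linarith
    then show ?thesis
    proof cases
      case 1
      then have "S = B" unfolding S_def t_def using sl0 by simp
      then have "p extreme_point_of P" using p extreme_point_of_face[OF BP] by blast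
      then show ?thesis by (rule ext_lattice)
    next
      case 2
      then have "S = T" unfolding S_def t_def using sl1 hn hh0 by simp
      then have "p extreme_point_of P" using p extreme_point_of_face[OF TP] by blast
      then show ?thesis by (rule ext_lattice)
    next
      case 3
      then have t: "0 < t" "t < 1" using hn hh0 unfolding t_def by auto
      have "{p} face_of S" using p face_of_singleton by blast
      then obtain c where pc: "{p} = amax S c" using exposed_amax[OF pS] by blast
      obtain y0 where y0: "y0 \<in> amax B c" using amax_ne[OF compB B_ne] by blast
      obtain z0 where z0: "z0 \<in> amax T c" using amax_ne[OF compT T_ne] by blast
      have y0B: "y0 \<in> B" and z0T: "z0 \<in> T" using y0 z0 amax_sub by blast+
      have "(1 - t) *\<^sub>R y0 + t *\<^sub>R z0 \<in> amax S c" using amax_sl[OF t y0B z0T] y0 z0 unfolding S_def by blast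
      then have "(1 - t) *\<^sub>R y0 + t *\<^sub>R z0 \<in> {p}" unfolding pc .
      then have p0: "p = (1 - t) *\<^sub>R y0 + t *\<^sub>R z0" by simp
      have By: "amax B c = {y0}"
      proof (intro set_eqI iffI)
        fix y assume y: "y \<in> amax B c"
        then have yB: "y \<in> B" using amax_sub by blast
        have "(1 - t) *\<^sub>R y + t *\<^sub>R z0 \<in> amax S c" using amax_sl[OF t yB z0T] y z0 unfolding S_def by blast
        then have "(1 - t) *\<^sub>R y + t *\<^sub>R z0 \<in> {p}" unfolding pc .
        then have "(1 - t) *\<^sub>R y + t *\<^sub>R z0 = (1 - t) *\<^sub>R y0 + t *\<^sub>R z0" using p0 by simp
        then have "(1 - t) *\<^sub>R y = (1 - t) *\<^sub>R y0" by simp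
        then show "y \<in> {y0}" using t by simp
      qed (use y0 in simp)
      have Tz: "amax T c = {z0}"
      proof (intro set_eqI iffI)
        fix z assume z: "z \<in> amax T c"
        then have zT: "z \<in> T" using amax_sub by blast
        have "(1 - t) *\<^sub>R y0 + t *\<^sub>R z \<in> amax S c" using amax_sl[OF t y0B zT] y0 z unfolding S_def by blast
        then have "(1 - t) *\<^sub>R y0 + t *\<^sub>R z \<in> {p}" unfolding pc .
        then have "(1 - t) *\<^sub>R y0 + t *\<^sub>R z = (1 - t) *\<^sub>R y0 + t *\<^sub>R z0" using p0 by simp
        then have "t *\<^sub>R z = t *\<^sub>R z0" by simp
        then show "z \<in> {z0}" using t by simp
      qed (use z0 in simp)
      obtain u where u: "lattice_pt u" "z0 = y0 + hh *\<^sub>R u" using L[OF By Tz] by blast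
      have "{y0} face_of P" using amaxB_face[of c] By by simp
      then have y0l: "lattice_pt y0" using ext_lattice face_of_singleton by blast
      have "p = (1 - t) *\<^sub>R y0 + t *\<^sub>R (y0 + hh *\<^sub>R u)" using p0 u by simp
      also have "\<dots> = y0 + (t * hh) *\<^sub>R u" by (simp add: algebra_simps)
      also have "\<dots> = y0 + real l *\<^sub>R u" using th by simp
      finally show ?thesis using lattice_add_mult[OF y0l u(1)] by simp
    qed
  qed
  have fin: "finite {p. p extreme_point_of S}"
    using finite_polyhedron_extreme_points[OF polytope_imp_polyhedron[OF pS]] .
  have "S = convex hull {p. p extreme_point_of S}"
    using Krein_Milman_Minkowski[OF polytope_imp_compact[OF pS] polytope_imp_convex[OF pS]] .
  then have "lattice_polytope S" unfolding lattice_polytope_def using fin ext by blast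
  then show ?thesis unfolding S_def t_def .
qed

end

lemma main_aux:
  fixes P B T :: "(real^'d) set" and k :: 'd and b :: int and h :: nat
  assumes sm: "smooth_polytope P" and pP: "polytope P" and dP: "aff_dim P = int CARD('d)"
    and ex: "\<exists>(Q::(real^'d) set) (j::'d) f. polytope Q \<and> aff_dim Q = int CARD('d) - 1 \<and> Q \<subseteq> {x. x $ j = 0} \<and>
        bij_betw f {F. F face_of P} {G. G face_of std_prism Q j} \<and>
        (\<forall>F F'. F face_of P \<longrightarrow> F' face_of P \<longrightarrow> (F \<subseteq> F' \<longleftrightarrow> f F \<subseteq> f F')) \<and>
        B face_of P \<and> T face_of P \<and>
        f B = Q \<and> f T = (\<lambda>q. q + axis j 1) ` Q"
    and lin: "lin_dir B = lin_dir T"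
    and Bh: "B \<subseteq> {x. x $ k = of_int b}"
    and Th: "T \<subseteq> {x. x $ k = of_int b + of_nat h}"
    and h0: "h > 0"
    and l: "l \<le> h"
  shows "let S = P \<inter> {x. x $ k = of_int b + of_nat l} in
              lattice_polytope S \<and> aff_dim S = int CARD('d) - 1 \<and>
              minkowski_equiv S B \<and> minkowski_equiv S T"
proof -
  define C where "C = (\<lambda>(Q::(real^'d) set) (j::'d) (f::(real^'d) set \<Rightarrow> (real^'d) set).
        polytope Q \<and> aff_dim Q = int CARD('d) - 1 \<and> Q \<subseteq> {x. x $ j = 0} \<and>
        bij_betw f {F. F face_of P} {G. G face_of std_prism Q j} \<and>
        (\<forall>F F'. F face_of P \<longrightarrow> F' face_of P \<longrightarrow> (F \<subseteq> F' \<longleftrightarrow> f F \<subseteq> f F')) \<and>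
        B face_of P \<and> T face_of P \<and>
        f B = Q \<and> f T = (\<lambda>q. q + axis j 1) ` Q)"
  have "\<exists>Q j f. C Q j f" using ex unfolding C_def by simp
  then obtain Q j f where C: "C Q j f" by blast
  then have H: "polytope Q \<and> aff_dim Q = int CARD('d) - 1 \<and> Q \<subseteq> {x. x $ j = 0} \<and>
        bij_betw f {F. F face_of P} {G. G face_of std_prism Q j} \<and>
        (\<forall>F F'. F face_of P \<longrightarrow> F' face_of P \<longrightarrow> (F \<subseteq> F' \<longleftrightarrow> f F \<subseteq> f F')) \<and>
        B face_of P \<and> T face_of P \<and>
        f B = Q \<and> f T = (\<lambda>q. q + axis j 1) ` Q" unfolding C_def by simp
  interpret prsm_sm P B T Q j f k "of_int b" "of_nat h" h
    apply unfold_locales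
    using H pP dP lin Bh Th h0 sm by (simp_all add: shj_def)
  define t where "t = real l / real h"
  have t01: "0 \<le> t" "t \<le> 1" using l h0 unfolding t_def by auto
  have "real_of_int b + real l = real_of_int b + t * real h" using h0 unfolding t_def by simp
  then have Seq: "P \<inter> {x. x $ k = of_int b + of_nat l} = sl B T t"
    using slice_eq[OF t01] by simp
  have "lattice_polytope (sl B T t)" using lat_sl[OF l] unfolding t_def by simp
  moreover have "aff_dim (sl B T t) = int CARD('d) - 1" using aff_sl[OF t01] .
  moreover have "minkowski_equiv (sl B T t) B" unfolding minkowski_equiv_def using fan_sl[OF t01] .
  moreover have "minkowski_equiv (sl B T t) T" unfolding minkowski_equiv_def using fan_sl[OF t01] fan_BT by simp
  ultimately show ?thesis unfolding Let_def Seq by blast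
qed

theorem lemma4p2:
  fixes P B T :: "(real^'d) set" and k :: 'd and b :: int and h :: nat
  assumes "smooth_polytope P"
    and "prismatoid P B T"
    and "B \<subseteq> {x. x $ k = of_int b}"
    and "T \<subseteq> {x. x $ k = of_int b + of_nat h}"
    and "h > 0"
  shows "\<forall>l::nat. l \<le> h \<longrightarrow>
           (let S = P \<inter> {x. x $ k = of_int b + of_nat l} in
              lattice_polytope S \<and> aff_dim S = int CARD('d) - 1 \<and>
              minkowski_equiv S B \<and> minkowski_equiv S T)"
proof (intro allI impI)
  fix l :: nat assume l: "l \<le> h"
  have H: "polytope P" "aff_dim P = int CARD('d)" "lin_dir B = lin_dir T"
    using assms(2) unfolding prismatoid_def by blast+
  have ex: "\<exists>(Q::(real^'d) set) (j::'d) f. polytope Q \<and> aff_dim Q = int CARD('d) - 1 \<and> Q \<subseteq> {x. x $ j = 0} \<and>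
        bij_betw f {F. F face_of P} {G. G face_of std_prism Q j} \<and>
        (\<forall>F F'. F face_of P \<longrightarrow> F' face_of P \<longrightarrow> (F \<subseteq> F' \<longleftrightarrow> f F \<subseteq> f F')) \<and>
        B face_of P \<and> T face_of P \<and>
        f B = Q \<and> f T = (\<lambda>q. q + axis j 1) ` Q"
    using assms(2) unfolding prismatoid_def by (elim conjE)
  show "let S = P \<inter> {x. x $ k = of_int b + of_nat l} in
              lattice_polytope S \<and> aff_dim S = int CARD('d) - 1 \<and>
              minkowski_equiv S B \<and> minkowski_equiv S T"
    by (rule main_aux[OF assms(1) H(1,2) ex H(3) assms(3,4,5) l])
qed

end
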